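(* Let $\alpha>0$ and $\varphi\in BMO$. Then $T_\varphi$ is bounded on $F^\infty_\alpha$ if and only if $\tilde{\varphi}_t\in L^\infty(\mathbb{C},dA)$ for every $t>0$.
   Context: $BMO$ denotes the space of locally integrable functions $\varphi$ on $\mathbb{C}$ with $\sup_{z\in\mathbb{C}}\frac{1}{|B(z,r)|}\int_{B(z,r)}|\varphi(w)-\hat\varphi_r(z)|\,dA(w)<\infty$, where $\hat\varphi_r(z)$ is the average of $\varphi$ over the disc $B(z,r)$ (the space does not depend on $r>0$). $d\lambda_\alpha(w)=\frac{\alpha}{\pi}e^{-\alpha|w|^2}dA(w)$, $K_z(w)=e^{\alpha\bar z w}$. $F^\infty_\alpha$ is the space of entire $f$ with $\|f\|_{\infty,\alpha}=\sup_z|f(z)|e^{-\alpha|z|^2/2}<\infty$. $T_\varphi f(z)=\int_{\mathbb{C}}\varphi(w)f(w)\overline{K_z(w)}\,d\lambda_\alpha(w)$. $\tilde{\varphi}_t(z)=\frac{\alpha}{\pi}\int_{\mathbb{C}}\varphi(w)e^{-\alpha t|z-w|^2/2}\,dA(w)$. *)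

theory Defs
  imports "HOL-Analysis.Analysis"
begin

definition locally_integrable :: "(complex \<Rightarrow> complex) \<Rightarrow> bool" where
  "locally_integrable \<phi> \<longleftrightarrow> (\<forall>z r. set_integrable lborel (cball z r) \<phi>)"

definition disc_avg :: "(complex \<Rightarrow> complex) \<Rightarrow> real \<Rightarrow> complex \<Rightarrow> complex" where
  "disc_avg \<phi> r z = (set_lebesgue_integral lborel (ball z r) \<phi>) / of_real (measure lborel (ball z r))"

text \<open>BMO (defined with radius r = 1; the space does not depend on r > 0).\<close>
definition BMO :: "(complex \<Rightarrow> complex) set" where
  "BMO = {\<phi>. locally_integrable \<phi> \<and>
     (\<exists>C. \<forall>z. (set_lebesgue_integral lborel (ball z 1) (\<lambda>w. norm (\<phi> w - disc_avg \<phi> 1 z)))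
                / measure lborel (ball z 1) \<le> C)}"

definition fock_inf :: "real \<Rightarrow> (complex \<Rightarrow> complex) set" where
  "fock_inf \<alpha> = {f. f holomorphic_on UNIV \<and>
      (\<exists>C. \<forall>z. norm (f z) * exp (- \<alpha> * (cmod z)\<^sup>2 / 2) \<le> C)}"

definition fock_inf_norm :: "real \<Rightarrow> (complex \<Rightarrow> complex) \<Rightarrow> real" where
  "fock_inf_norm \<alpha> f = (SUP z. norm (f z) * exp (- \<alpha> * (cmod z)\<^sup>2 / 2))"

definition fock_kernel :: "real \<Rightarrow> complex \<Rightarrow> complex \<Rightarrow> complex" where
  "fock_kernel \<alpha> z w = exp (of_real \<alpha> * cnj z * w)"

text \<open>Integrand of T_\<phi> f (z) against dA, with d\<lambda>_\<alpha> = (\<alpha>/\<pi>) e^{-\<alpha>|w|^2} dA.\<close>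
definition toeplitz_integrand ::
  "real \<Rightarrow> (complex \<Rightarrow> complex) \<Rightarrow> (complex \<Rightarrow> complex) \<Rightarrow> complex \<Rightarrow> complex \<Rightarrow> complex" where
  "toeplitz_integrand \<alpha> \<phi> f z w =
     \<phi> w * f w * cnj (fock_kernel \<alpha> z w) * of_real (\<alpha> / pi * exp (- \<alpha> * (cmod w)\<^sup>2))"

definition toeplitz :: "real \<Rightarrow> (complex \<Rightarrow> complex) \<Rightarrow> (complex \<Rightarrow> complex) \<Rightarrow> complex \<Rightarrow> complex" where
  "toeplitz \<alpha> \<phi> f z = integral\<^sup>L lborel (toeplitz_integrand \<alpha> \<phi> f z)"

definition toeplitz_bounded_fock_inf :: "real \<Rightarrow> (complex \<Rightarrow> complex) \<Rightarrow> bool" where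
  "toeplitz_bounded_fock_inf \<alpha> \<phi> \<longleftrightarrow>
     (\<exists>C. \<forall>f \<in> fock_inf \<alpha>.
        (\<forall>z. integrable lborel (toeplitz_integrand \<alpha> \<phi> f z)) \<and>
        toeplitz \<alpha> \<phi> f \<in> fock_inf \<alpha> \<and>
        fock_inf_norm \<alpha> (toeplitz \<alpha> \<phi> f) \<le> C * fock_inf_norm \<alpha> f)"

definition heat_transform :: "real \<Rightarrow> (complex \<Rightarrow> complex) \<Rightarrow> real \<Rightarrow> complex \<Rightarrow> complex" where
  "heat_transform \<alpha> \<phi> t z =
     of_real (\<alpha> / pi) * integral\<^sup>L lborel (\<lambda>w. \<phi> w * of_real (exp (- \<alpha> * t * (cmod (z - w))\<^sup>2 / 2)))"

definition Linf :: "(complex \<Rightarrow> complex) \<Rightarrow> bool" where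
  "Linf g \<longleftrightarrow> g \<in> borel_measurable lborel \<and> (\<exists>C. AE z in lborel. norm (g z) \<le> C)"

end

theory Submission
  imports Defs "HOL-Probability.Distributions"
begin

lemma gauss1_integrable:
  fixes c :: real assumes c: "c > 0"
  shows "integrable lborel (\<lambda>x::real. exp (- c * x\<^sup>2))"
proof -
  define s where "s = sqrt (1 / (2*c))"
  have s: "s > 0" using c by (simp add: s_def)
  have s2: "2 * s\<^sup>2 = 1 / c" using c by (simp add: s_def)
  have "integrable lborel (\<lambda>x. sqrt (2 * pi * s\<^sup>2) * normal_density 0 s x)"
    using s by (intro integrable_mult_right integrable_normal_density) auto
  moreover have "sqrt (2 * pi * s\<^sup>2) * normal_density 0 s x = exp (- c * x\<^sup>2)" for x
  proof -
    have "-(x - 0)\<^sup>2 / (2 * s\<^sup>2) = - c * x\<^sup>2" using s2 c by simp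
    moreover have "sqrt (2 * pi * s\<^sup>2) \<noteq> 0" using s by simp
    ultimately show ?thesis unfolding normal_density_def by simp
  qed
  ultimately show ?thesis by simp
qed

lemma gauss_nn_finite:
  fixes c :: real assumes c: "c > 0"
  shows "(\<integral>\<^sup>+w. ennreal (exp (- c * (cmod w)\<^sup>2)) \<partial>(lborel::complex measure)) < \<infinity>"
proof -
  have eq: "ennreal (exp (- c * (cmod w)\<^sup>2)) = (\<Prod>b\<in>Basis. ennreal (exp (- c * (w \<bullet> b)\<^sup>2)))" for w :: complex
  proof -
    have "(cmod w)\<^sup>2 = (Re w)\<^sup>2 + (Im w)\<^sup>2" by (simp add: cmod_power2)
    then have "exp (- c * (cmod w)\<^sup>2) = exp (- c * (Re w)\<^sup>2) * exp (- c * (Im w)\<^sup>2)"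
      by (simp add: algebra_simps flip: exp_add)
    then show ?thesis by (simp add: Basis_complex_def inner_complex_def ennreal_mult)
  qed
  have "(\<integral>\<^sup>+w. ennreal (exp (- c * (cmod w)\<^sup>2)) \<partial>(lborel::complex measure))
     = (\<Prod>b\<in>(Basis::complex set). (\<integral>\<^sup>+x. ennreal (exp (- c * x\<^sup>2)) \<partial>lborel))"
    unfolding eq by (rule nn_integral_lborel_prod) auto
  also have "\<dots> < \<infinity>"
    using gauss1_integrable[OF c]
    by (simp add: Basis_complex_def integrable_iff_bounded ennreal_mult_less_top)
  finally show ?thesis .
qed

lemma nn_integral_shift:
  fixes f :: "complex \<Rightarrow> ennreal" assumes [measurable]: "f \<in> borel_measurable borel"
  shows "(\<integral>\<^sup>+x. f (c + x) \<partial>lborel) = (\<integral>\<^sup>+x. f x \<partial>lborel)"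
proof -
  have "(\<integral>\<^sup>+x. f x \<partial>lborel) = (\<integral>\<^sup>+x. f x \<partial>(distr lborel borel ((+) c)))"
    by (simp add: lborel_distr_plus)
  also have "\<dots> = (\<integral>\<^sup>+x. f (c + x) \<partial>lborel)"
    by (subst nn_integral_distr) auto
  finally show ?thesis by simp
qed

lemma integrable_shift:
  fixes f :: "complex \<Rightarrow> 'b::{banach, second_countable_topology}"
  assumes [measurable]: "f \<in> borel_measurable borel"
  shows "integrable lborel (\<lambda>x. f (c + x)) \<longleftrightarrow> integrable lborel f"
proof -
  have "integrable lborel f \<longleftrightarrow> integrable (distr lborel borel ((+) c)) f"
    by (simp add: lborel_distr_plus)
  also have "\<dots> \<longleftrightarrow> integrable lborel (\<lambda>x. f (c + x))"
    by (subst integrable_distr_eq) auto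
  finally show ?thesis by simp
qed

lemma integral_shift:
  fixes f :: "complex \<Rightarrow> 'b::{banach, second_countable_topology}"
  assumes [measurable]: "f \<in> borel_measurable borel"
  shows "(\<integral>x. f (c + x) \<partial>lborel) = (\<integral>x. f x \<partial>lborel)"
proof -
  have "(\<integral>x. f x \<partial>lborel) = (\<integral>x. f x \<partial>(distr lborel borel ((+) c)))"
    by (simp add: lborel_distr_plus)
  also have "\<dots> = (\<integral>x. f (c + x) \<partial>lborel)"
    by (subst integral_distr) auto
  finally show ?thesis by simp
qed

lemma radial_shift_integrable:
  fixes h :: "real \<Rightarrow> real" assumes [measurable]: "h \<in> borel_measurable borel"
  and "integrable lborel (\<lambda>w::complex. h (cmod w))"
  shows "integrable lborel (\<lambda>w::complex. h (cmod (z - w)))"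
proof -
  have "integrable lborel (\<lambda>w::complex. h (cmod (-z + w)))"
    using assms by (subst integrable_shift) auto
  moreover have "cmod (-z + w) = cmod (z - w)" for w by (metis minus_diff_eq norm_minus_cancel uminus_add_conv_diff)
  ultimately show ?thesis by simp
qed

lemma radial_shift_integral:
  fixes h :: "real \<Rightarrow> real" assumes [measurable]: "h \<in> borel_measurable borel"
  shows "(\<integral>w. h (cmod (z - w)) \<partial>lborel) = (\<integral>w. h (cmod w) \<partial>(lborel::complex measure))"
proof -
  have "(\<integral>w. h (cmod (-z + w)) \<partial>lborel) = (\<integral>w. h (cmod w) \<partial>(lborel::complex measure))"
    by (subst integral_shift) auto
  moreover have "cmod (-z + w) = cmod (z - w)" for w by (metis minus_diff_eq norm_minus_cancel uminus_add_conv_diff)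
  ultimately show ?thesis by simp
qed

lemma gauss_integrable0:
  fixes c :: real assumes c: "c > 0"
  shows "integrable lborel (\<lambda>w::complex. exp (- c * (cmod w)\<^sup>2))"
  using gauss_nn_finite[OF c] by (simp add: integrable_iff_bounded)

lemma gauss_integrable:
  fixes c :: real assumes c: "c > 0"
  shows "integrable lborel (\<lambda>w::complex. exp (- c * (cmod (z - w))\<^sup>2))"
  using radial_shift_integrable[of "\<lambda>r. exp (- c * r\<^sup>2)"] gauss_integrable0[OF c] by auto

lemma gauss_integral:
  fixes c :: real
  shows "(\<integral>w. exp (- c * (cmod (z - w))\<^sup>2) \<partial>lborel) = (\<integral>w. exp (- c * (cmod w)\<^sup>2) \<partial>(lborel::complex measure))"
  using radial_shift_integral[of "\<lambda>r. exp (- c * r\<^sup>2)"] by auto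

lemma gauss_integral_pos:
  fixes c :: real assumes c: "c > 0"
  shows "(\<integral>w. exp (- c * (cmod w)\<^sup>2) \<partial>(lborel::complex measure)) > 0"
proof -
  have ne: "(\<integral>w. exp (- c * (cmod w)\<^sup>2) \<partial>(lborel::complex measure)) \<noteq> 0"
  proof
    assume "(\<integral>w. exp (- c * (cmod w)\<^sup>2) \<partial>(lborel::complex measure)) = 0"
    then have "AE w in (lborel::complex measure). exp (- c * (cmod w)\<^sup>2) = 0"
      using gauss_integrable0[OF c] by (subst (asm) integral_nonneg_eq_0_iff_AE) auto
    then have "AE w in (lborel::complex measure). False" by simp
    then have "(UNIV::complex set) \<in> null_sets lborel" by (subst AE_iff_null_sets) auto
    then show False by (simp add: null_sets_def)
  qed
  have "(\<integral>w. exp (- c * (cmod w)\<^sup>2) \<partial>(lborel::complex measure)) \<ge> 0"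
    by (intro integral_nonneg_AE) auto
  with ne show ?thesis by linarith
qed

lemma poly_gauss_bound:
  fixes c r :: real assumes c: "c > 0" and r: "r \<ge> 0"
  shows "(1 + r) * exp (- c * r\<^sup>2) \<le> exp (1 / (2*c)) * exp (- (c/2) * r\<^sup>2)"
proof -
  have "1 + r \<le> exp r" by (rule exp_ge_add_one_self)
  then have "(1 + r) * exp (- c * r\<^sup>2) \<le> exp r * exp (- c * r\<^sup>2)" by simp
  also have "\<dots> = exp (r - (c/2) * r\<^sup>2) * exp (- (c/2) * r\<^sup>2)" by (simp flip: exp_add)
  also have "r - (c/2) * r\<^sup>2 \<le> 1 / (2*c)"
  proof -
    have "0 \<le> (c*r - 1)\<^sup>2" by simp
    then have "2*c*r - c*c*r\<^sup>2 \<le> 1" by (simp add: power2_eq_square algebra_simps)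
    then show ?thesis using c by (simp add: field_simps power2_eq_square)
  qed
  then have "exp (r - (c/2) * r\<^sup>2) * exp (- (c/2) * r\<^sup>2) \<le> exp (1 / (2*c)) * exp (- (c/2) * r\<^sup>2)"
    by simp
  finally show ?thesis .
qed

lemma poly_gauss_integrable:
  fixes c :: real assumes c: "c > 0"
  shows "integrable lborel (\<lambda>w::complex. (1 + cmod (z - w)) * exp (- c * (cmod (z - w))\<^sup>2))"
proof (rule Bochner_Integration.integrable_bound)
  show "integrable lborel (\<lambda>w::complex. exp (1 / (2*c)) * exp (- (c/2) * (cmod (z - w))\<^sup>2))"
    using gauss_integrable[of "c/2" z] c by auto
  show "AE w in lborel. norm ((1 + cmod (z - w)) * exp (- c * (cmod (z - w))\<^sup>2))
     \<le> norm (exp (1 / (2*c)) * exp (- (c/2) * (cmod (z - w))\<^sup>2))"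
    using poly_gauss_bound[OF c] by (auto simp: abs_mult)
qed auto

lemma seti_mono_set:
  fixes f :: "'a \<Rightarrow> real"
  assumes "set_integrable M A f" "B \<in> sets M" "B \<subseteq> A" "\<And>x. x \<in> A \<Longrightarrow> f x \<ge> 0"
  shows "set_lebesgue_integral M B f \<le> set_lebesgue_integral M A f"
proof -
  have "set_integrable M B f" using assms set_integrable_subset by blast
  then show ?thesis using assms unfolding set_lebesgue_integral_def set_integrable_def
    by (intro integral_mono) (auto simp: indicator_def)
qed

lemma seti_nn:
  fixes f :: "'a \<Rightarrow> real"
  assumes "set_integrable M A f" "\<And>x. x \<in> A \<Longrightarrow> f x \<ge> 0"
  shows "(\<integral>\<^sup>+x. indicator A x * ennreal (f x) \<partial>M) = ennreal (set_lebesgue_integral M A f)"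
proof -
  have "(\<integral>\<^sup>+x. ennreal (indicator A x *\<^sub>R f x) \<partial>M) = ennreal (set_lebesgue_integral M A f)"
    unfolding set_lebesgue_integral_def using assms unfolding set_integrable_def
    by (intro nn_integral_eq_integral) (auto simp: indicator_def)
  moreover have "ennreal (indicator A x *\<^sub>R f x) = indicator A x * ennreal (f x)" for x
    by (auto simp: indicator_def)
  ultimately show ?thesis by simp
qed

lemma measure_ball_complex:
  assumes "r \<ge> 0"
  shows "measure lborel (ball (z::complex) r) = unit_ball_vol 2 * r\<^sup>2"
  using content_ball[where c=z and r=r] assms by simp

lemma emeasure_ball_complex:
  assumes "r \<ge> 0"
  shows "emeasure lborel (ball (z::complex) r) = ennreal (unit_ball_vol 2 * r\<^sup>2)"
  using emeasure_ball[where c=z and r=r] assms by simp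

locale bmo =
  fixes \<phi> :: "complex \<Rightarrow> complex"
  assumes bmo: "\<phi> \<in> BMO"
begin

definition a where "a = disc_avg \<phi> 1"
definition U :: real where "U = unit_ball_vol 2"

lemma U_pos: "U > 0" unfolding U_def by simp

lemma li: "set_integrable lborel (cball z r) \<phi>"
  using bmo unfolding BMO_def locally_integrable_def by auto

lemma lib: "set_integrable lborel (ball z r) \<phi>"
  by (rule set_integrable_subset[OF li[of z r]]) auto

lemma meas_lborel: "\<phi> \<in> borel_measurable lborel"
proof (rule borel_measurable_LIMSEQ_metric)
  show "(\<lambda>x. indicator (cball 0 (real i)) x *\<^sub>R \<phi> x) \<in> borel_measurable lborel" for i
    using li[of 0 "real i"] unfolding set_integrable_def by auto
  show "(\<lambda>i. indicator (cball 0 (real i)) x *\<^sub>R \<phi> x) \<longlonglongrightarrow> \<phi> x" for x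
  proof (rule tendsto_eventually)
    obtain n where "cmod x \<le> real n" using real_arch_simple by blast
    then show "\<forall>\<^sub>F i in sequentially. indicator (cball 0 (real i)) x *\<^sub>R \<phi> x = \<phi> x"
      by (intro eventually_sequentiallyI[of n]) (auto simp: indicator_def)
  qed
qed

lemma meas[measurable]: "\<phi> \<in> borel_measurable borel"
  using meas_lborel by simp

lemma seti_dev: "set_integrable lborel (ball z r) (\<lambda>w. cmod (\<phi> w - k))"
proof -
  have "set_integrable lborel (ball z r) (\<lambda>_. k)"
    unfolding set_integrable_def
    using emeasure_lborel_ball_finite[of z r] by (intro integrable_indicator) auto
  then show ?thesis by (intro set_integrable_norm set_integral_diff lib)
qed

lemma bmo_const: "\<exists>C\<ge>0. \<forall>z. set_lebesgue_integral lborel (ball z 1) (\<lambda>w. cmod (\<phi> w - a z)) \<le> C * U"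
proof -
  obtain C where C: "\<And>z. set_lebesgue_integral lborel (ball z 1) (\<lambda>w. cmod (\<phi> w - disc_avg \<phi> 1 z))
                / measure lborel (ball z 1) \<le> C"
    using bmo unfolding BMO_def by blast
  have mb: "measure lborel (ball z 1) = U" for z :: complex
    using measure_ball_complex[of 1 z] by (simp add: U_def)
  show ?thesis
  proof (intro exI[of _ "max C 0"] conjI allI)
    fix z
    have "set_lebesgue_integral lborel (ball z 1) (\<lambda>w. cmod (\<phi> w - a z)) / U \<le> C"
      using C[of z] by (simp add: mb a_def)
    then have "set_lebesgue_integral lborel (ball z 1) (\<lambda>w. cmod (\<phi> w - a z)) \<le> C * U"
      using U_pos by (simp add: divide_le_eq)
    also have "\<dots> \<le> max C 0 * U" using U_pos by (intro mult_right_mono) auto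
    finally show "set_lebesgue_integral lborel (ball z 1) (\<lambda>w. cmod (\<phi> w - a z)) \<le> max C 0 * U" .
  qed auto
qed

definition C where "C = (SOME C. C \<ge> 0 \<and> (\<forall>z. set_lebesgue_integral lborel (ball z 1) (\<lambda>w. cmod (\<phi> w - a z)) \<le> C * U))"

lemma C_nonneg: "C \<ge> 0" and C_bound: "set_lebesgue_integral lborel (ball z 1) (\<lambda>w. cmod (\<phi> w - a z)) \<le> C * U"
  using someI_ex[OF bmo_const] unfolding C_def by auto

lemma a_close:
  assumes "cmod (z - z') \<le> 1/2"
  shows "cmod (a z - a z') \<le> 8 * C"
proof -
  let ?B = "ball z (1/2)"
  have sub1: "?B \<subseteq> ball z 1" by auto
  have sub2: "?B \<subseteq> ball z' 1"
  proof
    fix w assume "w \<in> ?B"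
    then have "dist z w < 1/2" by simp
    moreover have "dist z' z \<le> 1/2" using assms by (simp add: dist_norm norm_minus_commute)
    ultimately show "w \<in> ball z' 1" using dist_triangle[of z' w z] by simp
  qed
  have mB: "measure lborel ?B = U / 4" using measure_ball_complex[of "1/2" z] by (simp add: U_def power2_eq_square)
  have "measure lborel ?B * cmod (a z - a z') = set_lebesgue_integral lborel ?B (\<lambda>_. cmod (a z - a z'))"
    by (subst set_integral_const) (auto simp: emeasure_ball_complex)
  also have "\<dots> \<le> set_lebesgue_integral lborel ?B (\<lambda>w. cmod (\<phi> w - a z) + cmod (\<phi> w - a z'))"
  proof (rule set_integral_mono)
    show "set_integrable lborel ?B (\<lambda>_. cmod (a z - a z'))"
      unfolding set_integrable_def
      by (intro integrable_indicator) (auto simp: emeasure_ball_complex)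
    show "set_integrable lborel ?B (\<lambda>w. cmod (\<phi> w - a z) + cmod (\<phi> w - a z'))"
      by (intro set_integral_add seti_dev)
    show "cmod (a z - a z') \<le> cmod (\<phi> w - a z) + cmod (\<phi> w - a z')" for w
    proof -
      have "a z - a z' = (\<phi> w - a z') - (\<phi> w - a z)" by simp
      then have "cmod (a z - a z') = cmod ((\<phi> w - a z') - (\<phi> w - a z))" by (rule arg_cong)
      also have "\<dots> \<le> cmod (\<phi> w - a z') + cmod (\<phi> w - a z)" by (rule norm_triangle_ineq4)
      finally show ?thesis by simp
    qed
  qed
  also have "\<dots> = set_lebesgue_integral lborel ?B (\<lambda>w. cmod (\<phi> w - a z)) + set_lebesgue_integral lborel ?B (\<lambda>w. cmod (\<phi> w - a z'))"
    by (intro set_integral_add seti_dev)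
  also have "\<dots> \<le> set_lebesgue_integral lborel (ball z 1) (\<lambda>w. cmod (\<phi> w - a z)) + set_lebesgue_integral lborel (ball z' 1) (\<lambda>w. cmod (\<phi> w - a z'))"
    by (intro add_mono seti_mono_set[OF seti_dev] sub1 sub2) auto
  also have "\<dots> \<le> C * U + C * U" by (intro add_mono C_bound)
  finally have h: "U / 4 * cmod (a z - a z') \<le> C * U + C * U" using mB by simp
  have e1: "U * cmod (a z - a z') = 4 * (U / 4 * cmod (a z - a z'))" by simp
  have e2: "U * (8 * C) = 4 * (C * U + C * U)" by simp
  have "U * cmod (a z - a z') \<le> U * (8 * C)" unfolding e1 e2 using h by (intro mult_left_mono) auto
  then show ?thesis using U_pos by simp
qed

end

context bmo begin

lemma a_chain: "cmod (z - w) \<le> real n / 2 \<Longrightarrow> cmod (a z - a w) \<le> 8 * C * real n"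
proof (induction n arbitrary: z w)
  case 0
  then show ?case by simp
next
  case (Suc n)
  show ?case
  proof (cases "cmod (z - w) \<le> 1/2")
    case True
    then have "cmod (a z - a w) \<le> 8 * C" by (rule a_close)
    also have "\<dots> \<le> 8 * C * real (Suc n)" using C_nonneg mult_left_mono[of 1 "real (Suc n)" "8*C"] by simp
    finally show ?thesis .
  next
    case False
    define d where "d = cmod (z - w)"
    have d: "d > 1/2" using False d_def by simp
    define m where "m = w + of_real (1 / (2*d)) * (z - w)"
    have "m - w = of_real (1 / (2*d)) * (z - w)" unfolding m_def by simp
    then have "cmod (m - w) = abs (1 / (2*d)) * d" unfolding d_def by (simp only: norm_mult norm_of_real)
    then have mw: "cmod (m - w) = 1/2" using d by simp
    have "z - m = of_real (1 - 1 / (2*d)) * (z - w)" unfolding m_def by (simp add: algebra_simps)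
    then have "cmod (z - m) = abs (1 - 1 / (2*d)) * d" unfolding d_def by (simp only: norm_mult norm_of_real)
    also have "abs (1 - 1 / (2*d)) = 1 - 1 / (2*d)" using d by (simp add: field_simps)
    finally have "cmod (z - m) = (1 - 1 / (2*d)) * d" .
    also have "\<dots> = d - 1/2" using d by (simp add: field_simps)
    finally have "cmod (z - m) \<le> real n / 2" using Suc.prems d_def by simp
    then have 1: "cmod (a z - a m) \<le> 8 * C * real n" by (rule Suc.IH)
    have 2: "cmod (a m - a w) \<le> 8 * C" using mw by (intro a_close) simp
    have "cmod (a z - a w) \<le> cmod (a z - a m) + cmod (a m - a w)" by (rule norm_diff_triangle_le[of _ "a m"]) simp_all
    also have "\<dots> \<le> 8 * C * real n + 8 * C" using 1 2 by simp
    also have "\<dots> = 8 * C * real (Suc n)" by (simp add: algebra_simps)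
    finally show ?thesis .
  qed
qed

lemma a_lip: "cmod (a z - a w) \<le> 8 * C * (1 + 2 * cmod (z - w))"
proof -
  define n where "n = nat \<lceil>2 * cmod (z - w)\<rceil>"
  have n1: "real n \<ge> 2 * cmod (z - w)" unfolding n_def by linarith
  have n2: "real n \<le> 1 + 2 * cmod (z - w)"
  proof -
    have "0 \<le> \<lceil>2 * cmod (z - w)\<rceil>" by (subst zero_le_ceiling) (use norm_ge_zero[of "z-w"] in linarith)
    then have "real n = real_of_int \<lceil>2 * cmod (z - w)\<rceil>" unfolding n_def by simp
    also have "\<dots> \<le> 1 + 2 * cmod (z - w)" by linarith
    finally show ?thesis .
  qed
  have "cmod (a z - a w) \<le> 8 * C * real n" using n1 by (intro a_chain) simp
  also have "\<dots> \<le> 8 * C * (1 + 2 * cmod (z - w))" using n2 C_nonneg by (intro mult_left_mono) auto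
  finally show ?thesis .
qed

end

context bmo begin

lemma prod_meas: "(\<lambda>(u, w). indicator (ball u 1) w * ennreal (K * cmod (\<phi> u - k) * exp (-(c/2)*(cmod(z-w))\<^sup>2)))
   \<in> borel_measurable (lborel \<Otimes>\<^sub>M lborel)"
  unfolding indicator_def mem_ball by measurable

lemma step1:
  assumes c: "c > 0"
  shows "ennreal (cmod (\<phi> u - a z) * exp (- c * (cmod (z - u))\<^sup>2))
     \<le> (\<integral>\<^sup>+w. indicator (ball u 1) w * ennreal (exp c / U * cmod (\<phi> u - a z) * exp (-(c/2)*(cmod(z-w))\<^sup>2)) \<partial>lborel)"
proof -
  let ?g = "cmod (\<phi> u - a z)" and ?E = "exp (- c * (cmod (z - u))\<^sup>2)"
  have "ennreal (?g * ?E) = ennreal (?g * ?E / U) * emeasure lborel (ball u 1)"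
    using U_pos by (simp add: emeasure_ball_complex U_def[symmetric] flip: ennreal_mult)
  also have "\<dots> = (\<integral>\<^sup>+w. ennreal (?g * ?E / U) * indicator (ball u 1) w \<partial>lborel)"
    by (simp add: nn_integral_cmult_indicator)
  also have "\<dots> \<le> (\<integral>\<^sup>+w. indicator (ball u 1) w * ennreal (exp c / U * ?g * exp (-(c/2)*(cmod(z-w))\<^sup>2)) \<partial>lborel)"
  proof (intro nn_integral_mono)
    fix w
    show "ennreal (?g * ?E / U) * indicator (ball u 1) w
       \<le> indicator (ball u 1) w * ennreal (exp c / U * ?g * exp (-(c/2)*(cmod(z-w))\<^sup>2))"
    proof (cases "w \<in> ball u 1")
      case True
      then have "dist u w < 1" by simp
      then have "cmod (z - w) \<le> cmod (z - u) + 1"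
        using norm_triangle_ineq[of "z - u" "u - w"] by (simp add: dist_norm)
      then have "(cmod (z - w))\<^sup>2 \<le> (cmod (z - u) + 1)\<^sup>2" by (intro power_mono) auto
      also have "\<dots> \<le> 2 * (cmod (z - u))\<^sup>2 + 2"
      proof -
        have "0 \<le> (cmod (z - u) - 1)\<^sup>2" by simp
        then show ?thesis unfolding power2_diff power2_sum by simp
      qed
      finally have "(cmod(z-w))\<^sup>2 \<le> 2*(cmod(z-u))\<^sup>2 + 2" .
      then have "c * (cmod(z-w))\<^sup>2 \<le> c * (2*(cmod(z-u))\<^sup>2 + 2)" using c by (intro mult_left_mono) auto
      then have "- c * (cmod (z - u))\<^sup>2 \<le> c + (-(c/2)*(cmod(z-w))\<^sup>2)" by (simp add: algebra_simps)
      then have "?E \<le> exp c * exp (-(c/2)*(cmod(z-w))\<^sup>2)" by (simp flip: exp_add)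
      then have "?g / U * ?E \<le> ?g / U * (exp c * exp (-(c/2)*(cmod(z-w))\<^sup>2))"
        using U_pos by (intro mult_left_mono) auto
      then have "?g * ?E / U \<le> exp c / U * ?g * exp (-(c/2)*(cmod(z-w))\<^sup>2)"
        by (simp add: algebra_simps)
      then show ?thesis using True by (simp add: ennreal_leI)
    qed simp
  qed
  finally show ?thesis .
qed

lemma inner_bound:
  "(\<integral>\<^sup>+u. indicator (ball w 1) u * ennreal (cmod (\<phi> u - a z)) \<partial>lborel)
     \<le> ennreal (C * U + 8 * C * (1 + 2 * cmod (z - w)) * U)"
proof -
  let ?L = "8 * C * (1 + 2 * cmod (z - w))"
  have "(\<integral>\<^sup>+u. indicator (ball w 1) u * ennreal (cmod (\<phi> u - a z)) \<partial>lborel)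
     \<le> (\<integral>\<^sup>+u. indicator (ball w 1) u * ennreal (cmod (\<phi> u - a w)) + ennreal ?L * indicator (ball w 1) u \<partial>lborel)"
  proof (intro nn_integral_mono)
    fix u
    have "cmod (\<phi> u - a z) \<le> cmod (\<phi> u - a w) + cmod (a w - a z)"
      by (rule norm_diff_triangle_le[of _ "a w"]) simp_all
    also have "cmod (a w - a z) \<le> ?L" using a_lip[of w z] by (simp add: norm_minus_commute)
    finally have "cmod (\<phi> u - a z) \<le> cmod (\<phi> u - a w) + ?L" by simp
    then have "ennreal (cmod (\<phi> u - a z)) \<le> ennreal (cmod (\<phi> u - a w)) + ennreal ?L"
      using C_nonneg by (simp add: ennreal_plus[symmetric] del: ennreal_plus)
    then show "indicator (ball w 1) u * ennreal (cmod (\<phi> u - a z))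
      \<le> indicator (ball w 1) u * ennreal (cmod (\<phi> u - a w)) + ennreal ?L * indicator (ball w 1) u"
      by (auto simp: indicator_def)
  qed
  also have "\<dots> = (\<integral>\<^sup>+u. indicator (ball w 1) u * ennreal (cmod (\<phi> u - a w)) \<partial>lborel)
        + (\<integral>\<^sup>+u. ennreal ?L * indicator (ball w 1) u \<partial>lborel)"
    unfolding indicator_def mem_ball by (rule nn_integral_add) measurable
  also have "(\<integral>\<^sup>+u. indicator (ball w 1) u * ennreal (cmod (\<phi> u - a w)) \<partial>lborel)
      = ennreal (set_lebesgue_integral lborel (ball w 1) (\<lambda>u. cmod (\<phi> u - a w)))"
    by (rule seti_nn[OF seti_dev]) simp
  also have "(\<integral>\<^sup>+u. ennreal ?L * indicator (ball w 1) u \<partial>lborel) = ennreal (?L * U)"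
    using C_nonneg U_pos
    by (simp add: nn_integral_cmult_indicator emeasure_ball_complex U_def[symmetric] ennreal_mult)
  also have "ennreal (set_lebesgue_integral lborel (ball w 1) (\<lambda>u. cmod (\<phi> u - a w))) + ennreal (?L * U)
      = ennreal (set_lebesgue_integral lborel (ball w 1) (\<lambda>u. cmod (\<phi> u - a w)) + ?L * U)"
  proof (intro ennreal_plus[symmetric])
    show "0 \<le> set_lebesgue_integral lborel (ball w 1) (\<lambda>u. cmod (\<phi> u - a w))"
      unfolding set_lebesgue_integral_def by (rule integral_nonneg_AE) (auto simp: indicator_def)
    show "0 \<le> ?L * U" using C_nonneg U_pos by simp
  qed
  also have "\<dots> \<le> ennreal (C * U + 8 * C * (1 + 2 * cmod (z - w)) * U)"
    using C_bound[of w] by (intro ennreal_leI) simp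
  finally show ?thesis .
qed

definition KB :: "real \<Rightarrow> real" where
  "KB c = 16 * exp c * C * (\<integral>w. (1 + cmod w) * exp (-(c/2) * (cmod w)\<^sup>2) \<partial>(lborel::complex measure))"

lemma key_nn:
  assumes c: "c > 0"
  shows "(\<integral>\<^sup>+u. ennreal (cmod (\<phi> u - a z) * exp (- c * (cmod (z - u))\<^sup>2)) \<partial>lborel) \<le> ennreal (KB c)"
proof -
  let ?K1 = "exp c / U"
  let ?F = "\<lambda>w. exp (-(c/2)*(cmod(z-w))\<^sup>2)"
  let ?g = "\<lambda>u. cmod (\<phi> u - a z)"
  have "(\<integral>\<^sup>+u. ennreal (?g u * exp (- c * (cmod (z - u))\<^sup>2)) \<partial>lborel)
      \<le> (\<integral>\<^sup>+u. (\<integral>\<^sup>+w. indicator (ball u 1) w * ennreal (?K1 * ?g u * ?F w) \<partial>lborel) \<partial>lborel)"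
    by (intro nn_integral_mono step1[OF c])
  also have "\<dots> = (\<integral>\<^sup>+w. (\<integral>\<^sup>+u. indicator (ball u 1) w * ennreal (?K1 * ?g u * ?F w) \<partial>lborel) \<partial>lborel)"
    by (rule lborel_pair.Fubini'[symmetric]) (rule prod_meas)
  also have "\<dots> = (\<integral>\<^sup>+w. ennreal (?K1 * ?F w) * (\<integral>\<^sup>+u. indicator (ball w 1) u * ennreal (?g u) \<partial>lborel) \<partial>lborel)"
  proof (intro nn_integral_cong)
    fix w
    have "(\<integral>\<^sup>+u. indicator (ball u 1) w * ennreal (?K1 * ?g u * ?F w) \<partial>lborel)
        = (\<integral>\<^sup>+u. ennreal (?K1 * ?F w) * (indicator (ball w 1) u * ennreal (?g u)) \<partial>lborel)"
    proof -
      have e: "ennreal (?K1 * ?g u * ?F w) = ennreal (?K1 * ?F w) * ennreal (?g u)" for u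
      proof -
        have "?K1 * ?g u * ?F w = (?K1 * ?F w) * ?g u" by simp
        then show ?thesis using U_pos by (simp only: ) (rule ennreal_mult, auto)
      qed
      show ?thesis unfolding e by (intro nn_integral_cong) (auto simp: indicator_def dist_commute)
    qed
    also have "\<dots> = ennreal (?K1 * ?F w) * (\<integral>\<^sup>+u. indicator (ball w 1) u * ennreal (?g u) \<partial>lborel)"
      unfolding indicator_def mem_ball by (rule nn_integral_cmult) measurable
    finally show "(\<integral>\<^sup>+u. indicator (ball u 1) w * ennreal (?K1 * ?g u * ?F w) \<partial>lborel)
        = ennreal (?K1 * ?F w) * (\<integral>\<^sup>+u. indicator (ball w 1) u * ennreal (?g u) \<partial>lborel)" .
  qed
  also have "\<dots> \<le> (\<integral>\<^sup>+w. ennreal (16 * exp c * C * ((1 + cmod (z - w)) * ?F w)) \<partial>lborel)"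
  proof (intro nn_integral_mono)
    fix w
    have "ennreal (?K1 * ?F w) * (\<integral>\<^sup>+u. indicator (ball w 1) u * ennreal (?g u) \<partial>lborel)
        \<le> ennreal (?K1 * ?F w) * ennreal (C * U + 8 * C * (1 + 2 * cmod (z - w)) * U)"
      by (intro mult_left_mono inner_bound) simp
    also have "\<dots> = ennreal (?K1 * ?F w * (C * U + 8 * C * (1 + 2 * cmod (z - w)) * U))"
      using U_pos C_nonneg by (intro ennreal_mult[symmetric]) auto
    also have "\<dots> \<le> ennreal (16 * exp c * C * ((1 + cmod (z - w)) * ?F w))"
    proof (intro ennreal_leI)
      have "?K1 * ?F w * (C * U + 8 * C * (1 + 2 * cmod (z - w)) * U)
          = exp c * C * ?F w * (9 + 16 * cmod (z - w))"
        using U_pos by (simp add: field_simps)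
      also have "\<dots> \<le> exp c * C * ?F w * (16 * (1 + cmod (z - w)))"
        using C_nonneg by (intro mult_left_mono) auto
      also have "\<dots> = 16 * exp c * C * ((1 + cmod (z - w)) * ?F w)" by (simp add: algebra_simps)
      finally show "?K1 * ?F w * (C * U + 8 * C * (1 + 2 * cmod (z - w)) * U)
          \<le> 16 * exp c * C * ((1 + cmod (z - w)) * ?F w)" .
    qed
    finally show "ennreal (?K1 * ?F w) * (\<integral>\<^sup>+u. indicator (ball w 1) u * ennreal (?g u) \<partial>lborel)
        \<le> ennreal (16 * exp c * C * ((1 + cmod (z - w)) * ?F w))" .
  qed
  also have "\<dots> = ennreal (\<integral>w. 16 * exp c * C * ((1 + cmod (z - w)) * ?F w) \<partial>lborel)"
    using poly_gauss_integrable[of "c/2" z] c C_nonneg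
    by (intro nn_integral_eq_integral) auto
  also have "(\<integral>w. 16 * exp c * C * ((1 + cmod (z - w)) * ?F w) \<partial>lborel) = KB c"
  proof -
    have "(\<integral>w. (1 + cmod (z - w)) * ?F w \<partial>lborel) = (\<integral>w. (1 + cmod w) * exp (-(c/2) * (cmod w)\<^sup>2) \<partial>(lborel::complex measure))"
      using radial_shift_integral[of "\<lambda>r. (1 + r) * exp (-(c/2) * r\<^sup>2)" z] by simp
    then show ?thesis unfolding KB_def by simp
  qed
  finally show ?thesis .
qed

end

definition G :: "real \<Rightarrow> real" where
  "G c = (\<integral>w. exp (- c * (cmod w)\<^sup>2) \<partial>(lborel::complex measure))"

context bmo begin

lemma KB_nonneg: "c > 0 \<Longrightarrow> KB c \<ge> 0"
  unfolding KB_def using C_nonneg by (intro mult_nonneg_nonneg integral_nonneg_AE) auto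

lemma dev_integrable:
  assumes c: "c > 0"
  shows "integrable lborel (\<lambda>w. cmod (\<phi> w - a z) * exp (- c * (cmod (z - w))\<^sup>2))"
proof -
  have "(\<integral>\<^sup>+u. ennreal (norm (cmod (\<phi> u - a z) * exp (- c * (cmod (z - u))\<^sup>2))) \<partial>lborel) < \<infinity>"
    using key_nn[OF c, of z] by (simp add: abs_mult) (meson ennreal_less_top order.strict_trans1)
  then show ?thesis by (simp add: integrable_iff_bounded)
qed

lemma dev_integral:
  assumes c: "c > 0"
  shows "(\<integral>w. cmod (\<phi> w - a z) * exp (- c * (cmod (z - w))\<^sup>2) \<partial>lborel) \<le> KB c"
proof -
  have "ennreal (\<integral>w. cmod (\<phi> w - a z) * exp (- c * (cmod (z - w))\<^sup>2) \<partial>lborel)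
      = (\<integral>\<^sup>+u. ennreal (cmod (\<phi> u - a z) * exp (- c * (cmod (z - u))\<^sup>2)) \<partial>lborel)"
    using dev_integrable[OF c, of z] by (intro nn_integral_eq_integral[symmetric]) auto
  also have "\<dots> \<le> ennreal (KB c)" by (rule key_nn[OF c])
  finally show ?thesis using KB_nonneg[OF c] by (simp add: ennreal_le_iff)
qed

lemma G_pos: "c > 0 \<Longrightarrow> G c > 0"
  unfolding G_def by (rule gauss_integral_pos)

lemma phi_gauss_integrable:
  assumes c: "c > 0"
  shows "integrable lborel (\<lambda>w. \<phi> w * complex_of_real (exp (- c * (cmod (z - w))\<^sup>2)))"
    and "integrable lborel (\<lambda>w. cmod (\<phi> w) * exp (- c * (cmod (z - w))\<^sup>2))"
proof -
  have i1: "integrable lborel (\<lambda>w. (\<phi> w - a z) * complex_of_real (exp (- c * (cmod (z - w))\<^sup>2)))"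
    using dev_integrable[OF c, of z] by (subst integrable_norm_iff[symmetric]) (auto simp: norm_mult)
  have i2: "integrable lborel (\<lambda>w. a z * complex_of_real (exp (- c * (cmod (z - w))\<^sup>2)))"
    using gauss_integrable[OF c, of z] by (intro integrable_mult_right integrable_of_real)
  have "integrable lborel (\<lambda>w. (\<phi> w - a z) * complex_of_real (exp (- c * (cmod (z - w))\<^sup>2))
      + a z * complex_of_real (exp (- c * (cmod (z - w))\<^sup>2)))"
    using i1 i2 by (rule Bochner_Integration.integrable_add)
  then show i3: "integrable lborel (\<lambda>w. \<phi> w * complex_of_real (exp (- c * (cmod (z - w))\<^sup>2)))"
    by (simp add: algebra_simps)
  show "integrable lborel (\<lambda>w. cmod (\<phi> w) * exp (- c * (cmod (z - w))\<^sup>2))"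
    using integrable_norm[OF i3] by (simp add: norm_mult)
qed

lemma decomp:
  assumes c: "c > 0"
  shows "cmod ((\<integral>w. \<phi> w * complex_of_real (exp (- c * (cmod (z - w))\<^sup>2)) \<partial>lborel) - a z * complex_of_real (G c)) \<le> KB c"
proof -
  let ?E = "\<lambda>w. exp (- c * (cmod (z - w))\<^sup>2)"
  have i1: "integrable lborel (\<lambda>w. (\<phi> w - a z) * complex_of_real (?E w))"
    using dev_integrable[OF c, of z] by (subst integrable_norm_iff[symmetric]) (auto simp: norm_mult)
  have i2: "integrable lborel (\<lambda>w. a z * complex_of_real (?E w))"
    using gauss_integrable[OF c, of z] by (intro integrable_mult_right integrable_of_real)
  have "(\<integral>w. \<phi> w * complex_of_real (?E w) \<partial>lborel)
      = (\<integral>w. (\<phi> w - a z) * complex_of_real (?E w) + a z * complex_of_real (?E w) \<partial>lborel)"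
    by (simp add: algebra_simps)
  also have "\<dots> = (\<integral>w. (\<phi> w - a z) * complex_of_real (?E w) \<partial>lborel) + (\<integral>w. a z * complex_of_real (?E w) \<partial>lborel)"
    using i1 i2 by (rule Bochner_Integration.integral_add)
  also have "(\<integral>w. a z * complex_of_real (?E w) \<partial>lborel) = a z * complex_of_real (G c)"
    unfolding G_def using gauss_integral[of c z] by simp
  finally have "(\<integral>w. \<phi> w * complex_of_real (?E w) \<partial>lborel) - a z * complex_of_real (G c)
      = (\<integral>w. (\<phi> w - a z) * complex_of_real (?E w) \<partial>lborel)" by simp
  then have "cmod ((\<integral>w. \<phi> w * complex_of_real (?E w) \<partial>lborel) - a z * complex_of_real (G c))
      \<le> (\<integral>w. cmod ((\<phi> w - a z) * complex_of_real (?E w)) \<partial>lborel)"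
    by (simp add: integral_norm_bound)
  also have "\<dots> = (\<integral>w. cmod (\<phi> w - a z) * ?E w \<partial>lborel)" by (simp add: norm_mult)
  also have "\<dots> \<le> KB c" by (rule dev_integral[OF c])
  finally show ?thesis .
qed

end

lemma norm_kernel: "norm (fock_kernel \<alpha> z w) = exp (\<alpha> * (Re z * Re w + Im z * Im w))"
  by (simp add: fock_kernel_def norm_exp_eq_Re algebra_simps)

lemma quad_ident: "\<alpha> * (Re z * Re w + Im z * Im w) - \<alpha> * (cmod w)\<^sup>2 / 2 = \<alpha> * (cmod z)\<^sup>2 / 2 - \<alpha> * (cmod (z - w))\<^sup>2 / 2"
  by (simp add: cmod_power2 power2_diff field_simps)

lemma kernel_fock:
  assumes "\<alpha> > 0"
  shows "fock_kernel \<alpha> z \<in> fock_inf \<alpha>"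
    and "\<And>w. norm (fock_kernel \<alpha> z w) * exp (- \<alpha> * (cmod w)\<^sup>2 / 2) \<le> exp (\<alpha> * (cmod z)\<^sup>2 / 2)"
proof -
  show b: "norm (fock_kernel \<alpha> z w) * exp (- \<alpha> * (cmod w)\<^sup>2 / 2) \<le> exp (\<alpha> * (cmod z)\<^sup>2 / 2)" for w
  proof -
    have "norm (fock_kernel \<alpha> z w) * exp (- \<alpha> * (cmod w)\<^sup>2 / 2)
        = exp (\<alpha> * (Re z * Re w + Im z * Im w) - \<alpha> * (cmod w)\<^sup>2 / 2)"
    proof -
      have "norm (fock_kernel \<alpha> z w) * exp (- \<alpha> * (cmod w)\<^sup>2 / 2)
          = exp (\<alpha> * (Re z * Re w + Im z * Im w)) * exp (- \<alpha> * (cmod w)\<^sup>2 / 2)"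
        by (simp only: norm_kernel)
      also have "\<dots> = exp (\<alpha> * (Re z * Re w + Im z * Im w) + (- \<alpha> * (cmod w)\<^sup>2 / 2))"
        by (rule exp_add[symmetric])
      finally show ?thesis by simp
    qed
    also have "\<dots> = exp (\<alpha> * (cmod z)\<^sup>2 / 2 - \<alpha> * (cmod (z - w))\<^sup>2 / 2)" by (simp only: quad_ident)
    also have "\<dots> \<le> exp (\<alpha> * (cmod z)\<^sup>2 / 2)" using assms by simp
    finally show ?thesis .
  qed
  have "fock_kernel \<alpha> z holomorphic_on UNIV"
    unfolding fock_kernel_def[abs_def] by (intro holomorphic_intros)
  then show "fock_kernel \<alpha> z \<in> fock_inf \<alpha>" unfolding fock_inf_def using b by blast
qed

lemma fock_bdd:
  assumes "f \<in> fock_inf \<alpha>"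
  shows "bdd_above (range (\<lambda>z. norm (f z) * exp (- \<alpha> * (cmod z)\<^sup>2 / 2)))"
  using assms unfolding fock_inf_def by (auto intro: bdd_aboveI2)

lemma fock_pointwise:
  assumes "f \<in> fock_inf \<alpha>"
  shows "norm (f z) * exp (- \<alpha> * (cmod z)\<^sup>2 / 2) \<le> fock_inf_norm \<alpha> f"
  unfolding fock_inf_norm_def by (rule cSUP_upper[OF _ fock_bdd[OF assms]]) simp

lemma fock_norm_nonneg:
  assumes "f \<in> fock_inf \<alpha>"
  shows "fock_inf_norm \<alpha> f \<ge> 0"
  using fock_pointwise[OF assms, of 0] by (smt (verit) mult_nonneg_nonneg norm_ge_zero exp_ge_zero)

lemma fock_norm_le:
  assumes "\<And>z. norm (f z) * exp (- \<alpha> * (cmod z)\<^sup>2 / 2) \<le> B"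
  shows "fock_inf_norm \<alpha> f \<le> B"
  unfolding fock_inf_norm_def apply (rule cSUP_least) apply simp apply (rule assms) done

lemma integrand_kernel:
  "toeplitz_integrand \<alpha> \<phi> (fock_kernel \<alpha> z) z w
   = complex_of_real (\<alpha> / pi * exp (\<alpha> * (cmod z)\<^sup>2)) * (\<phi> w * complex_of_real (exp (- \<alpha> * 2 * (cmod (z - w))\<^sup>2 / 2)))"
proof -
  let ?k = "fock_kernel \<alpha> z w"
  have "?k * cnj ?k = complex_of_real ((cmod ?k)\<^sup>2)" by (metis complex_norm_square of_real_power)
  also have "(cmod ?k)\<^sup>2 = exp (2 * (\<alpha> * (Re z * Re w + Im z * Im w)))"
    by (simp add: norm_kernel power2_eq_square flip: exp_add)
  finally have kk: "?k * cnj ?k = complex_of_real (exp (2 * (\<alpha> * (Re z * Re w + Im z * Im w))))" .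
  have re: "exp (2 * (\<alpha> * (Re z * Re w + Im z * Im w))) * exp (- \<alpha> * (cmod w)\<^sup>2)
      = exp (\<alpha> * (cmod z)\<^sup>2) * exp (- \<alpha> * 2 * (cmod (z - w))\<^sup>2 / 2)"
  proof -
    have "2 * (\<alpha> * (Re z * Re w + Im z * Im w)) + (- \<alpha> * (cmod w)\<^sup>2)
        = \<alpha> * (cmod z)\<^sup>2 + (- \<alpha> * 2 * (cmod (z - w))\<^sup>2 / 2)"
      using quad_ident[of \<alpha> z w] by (simp add: algebra_simps)
    then show ?thesis by (simp flip: exp_add)
  qed
  have "toeplitz_integrand \<alpha> \<phi> (fock_kernel \<alpha> z) z w
      = \<phi> w * (?k * cnj ?k) * complex_of_real (\<alpha> / pi * exp (- \<alpha> * (cmod w)\<^sup>2))"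
    unfolding toeplitz_integrand_def by (simp add: mult_ac)
  also have "\<dots> = \<phi> w * complex_of_real (\<alpha> / pi * (exp (2 * (\<alpha> * (Re z * Re w + Im z * Im w))) * exp (- \<alpha> * (cmod w)\<^sup>2)))"
    unfolding kk by (simp add: mult_ac)
  also have "\<dots> = complex_of_real (\<alpha> / pi * exp (\<alpha> * (cmod z)\<^sup>2)) * (\<phi> w * complex_of_real (exp (- \<alpha> * 2 * (cmod (z - w))\<^sup>2 / 2)))"
    unfolding re by (simp add: mult_ac)
  finally show ?thesis .
qed

lemma toeplitz_kernel:
  "toeplitz \<alpha> \<phi> (fock_kernel \<alpha> z) z = complex_of_real (exp (\<alpha> * (cmod z)\<^sup>2)) * heat_transform \<alpha> \<phi> 2 z"
proof -
  have "toeplitz_integrand \<alpha> \<phi> (fock_kernel \<alpha> z) z = (\<lambda>w. complex_of_real (\<alpha> / pi * exp (\<alpha> * (cmod z)\<^sup>2)) * (\<phi> w * complex_of_real (exp (- \<alpha> * 2 * (cmod (z - w))\<^sup>2 / 2))))"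
    by (rule ext, rule integrand_kernel)
  then show ?thesis
    unfolding toeplitz_def heat_transform_def by (simp only: integral_mult_right_zero) (simp add: mult_ac)
qed

context bmo begin

lemma heat_decomp:
  assumes \<alpha>: "\<alpha> > 0" and t: "t > 0"
  shows "cmod (heat_transform \<alpha> \<phi> t z - complex_of_real (\<alpha> / pi) * (a z * complex_of_real (G (\<alpha> * t / 2))))
         \<le> \<alpha> / pi * KB (\<alpha> * t / 2)"
proof -
  have c: "\<alpha> * t / 2 > 0" using \<alpha> t by simp
  have e: "exp (- \<alpha> * t * (cmod (z - w))\<^sup>2 / 2) = exp (- (\<alpha> * t / 2) * (cmod (z - w))\<^sup>2)" for w
    by (simp add: algebra_simps)
  let ?I = "\<integral>w. \<phi> w * complex_of_real (exp (- (\<alpha> * t / 2) * (cmod (z - w))\<^sup>2)) \<partial>lborel"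
  have h: "heat_transform \<alpha> \<phi> t z = complex_of_real (\<alpha> / pi) * ?I"
    unfolding heat_transform_def e ..
  have "heat_transform \<alpha> \<phi> t z - complex_of_real (\<alpha> / pi) * (a z * complex_of_real (G (\<alpha> * t / 2)))
      = complex_of_real (\<alpha> / pi) * (?I - a z * complex_of_real (G (\<alpha> * t / 2)))"
    unfolding h by (simp add: algebra_simps)
  then have "cmod (heat_transform \<alpha> \<phi> t z - complex_of_real (\<alpha> / pi) * (a z * complex_of_real (G (\<alpha> * t / 2))))
      = \<alpha> / pi * cmod (?I - a z * complex_of_real (G (\<alpha> * t / 2)))"
    using \<alpha> by (simp only: norm_mult norm_of_real) simp
  also have "\<dots> \<le> \<alpha> / pi * KB (\<alpha> * t / 2)"
    using \<alpha> by (intro mult_left_mono decomp[OF c]) auto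
  finally show ?thesis .
qed

lemma heat_meas: "heat_transform \<alpha> \<phi> t \<in> borel_measurable lborel"
  unfolding heat_transform_def[abs_def] by measurable

lemma a_bound_from_heat:
  assumes \<alpha>: "\<alpha> > 0" and t: "t > 0" and h: "cmod (heat_transform \<alpha> \<phi> t z) \<le> M"
  shows "cmod (a z) \<le> (M + \<alpha> / pi * KB (\<alpha> * t / 2)) / (\<alpha> / pi * G (\<alpha> * t / 2))"
proof -
  have c: "\<alpha> * t / 2 > 0" using \<alpha> t by simp
  have pos: "\<alpha> / pi * G (\<alpha> * t / 2) > 0" using \<alpha> G_pos[OF c] by simp
  have "cmod (complex_of_real (\<alpha> / pi) * (a z * complex_of_real (G (\<alpha> * t / 2))))
      \<le> cmod (heat_transform \<alpha> \<phi> t z) + cmod (heat_transform \<alpha> \<phi> t z - complex_of_real (\<alpha> / pi) * (a z * complex_of_real (G (\<alpha> * t / 2))))"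
    using norm_triangle_ineq4[of "heat_transform \<alpha> \<phi> t z" "heat_transform \<alpha> \<phi> t z - complex_of_real (\<alpha> / pi) * (a z * complex_of_real (G (\<alpha> * t / 2)))"]
    by simp
  also have "\<dots> \<le> M + \<alpha> / pi * KB (\<alpha> * t / 2)" using h heat_decomp[OF \<alpha> t, of z] by simp
  finally have "\<alpha> / pi * G (\<alpha> * t / 2) * cmod (a z) \<le> M + \<alpha> / pi * KB (\<alpha> * t / 2)"
    using \<alpha> G_pos[OF c] by (simp only: norm_mult norm_of_real) (simp add: mult_ac)
  then show ?thesis by (subst pos_le_divide_eq[OF pos]) (simp add: mult.commute)
qed

lemma heat_bound_from_a:
  assumes \<alpha>: "\<alpha> > 0" and t: "t > 0" and h: "cmod (a z) \<le> A"
  shows "cmod (heat_transform \<alpha> \<phi> t z) \<le> \<alpha> / pi * A * G (\<alpha> * t / 2) + \<alpha> / pi * KB (\<alpha> * t / 2)"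
proof -
  have c: "\<alpha> * t / 2 > 0" using \<alpha> t by simp
  have "cmod (heat_transform \<alpha> \<phi> t z) \<le> cmod (complex_of_real (\<alpha> / pi) * (a z * complex_of_real (G (\<alpha> * t / 2))))
      + cmod (heat_transform \<alpha> \<phi> t z - complex_of_real (\<alpha> / pi) * (a z * complex_of_real (G (\<alpha> * t / 2))))"
    by (rule norm_triangle_sub)
  also have "cmod (complex_of_real (\<alpha> / pi) * (a z * complex_of_real (G (\<alpha> * t / 2)))) = \<alpha> / pi * cmod (a z) * G (\<alpha> * t / 2)"
    using \<alpha> G_pos[OF c] by (simp only: norm_mult norm_of_real) (simp add: mult_ac)
  also have "\<dots> \<le> \<alpha> / pi * A * G (\<alpha> * t / 2)"
    using \<alpha> G_pos[OF c] h by (intro mult_right_mono mult_left_mono) auto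
  finally show ?thesis using heat_decomp[OF \<alpha> t, of z] by simp
qed

lemma forward:
  assumes \<alpha>: "\<alpha> > 0" and tb: "toeplitz_bounded_fock_inf \<alpha> \<phi>"
  shows "\<forall>t>0. Linf (heat_transform \<alpha> \<phi> t)"
proof -
  obtain CT where CT: "\<And>f. f \<in> fock_inf \<alpha> \<Longrightarrow> toeplitz \<alpha> \<phi> f \<in> fock_inf \<alpha> \<and>
        fock_inf_norm \<alpha> (toeplitz \<alpha> \<phi> f) \<le> CT * fock_inf_norm \<alpha> f"
    using tb unfolding toeplitz_bounded_fock_inf_def by blast
  have h2: "cmod (heat_transform \<alpha> \<phi> 2 z) \<le> \<bar>CT\<bar>" for z
  proof -
    let ?f = "fock_kernel \<alpha> z"
    have f: "?f \<in> fock_inf \<alpha>" by (rule kernel_fock(1)[OF \<alpha>])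
    have nf: "fock_inf_norm \<alpha> ?f \<le> exp (\<alpha> * (cmod z)\<^sup>2 / 2)"
      by (rule fock_norm_le) (rule kernel_fock(2)[OF \<alpha>])
    have nf0: "fock_inf_norm \<alpha> ?f \<ge> 0" by (rule fock_norm_nonneg[OF f])
    have "norm (toeplitz \<alpha> \<phi> ?f z) * exp (- \<alpha> * (cmod z)\<^sup>2 / 2) \<le> fock_inf_norm \<alpha> (toeplitz \<alpha> \<phi> ?f)"
      using CT[OF f] by (intro fock_pointwise) auto
    also have "\<dots> \<le> CT * fock_inf_norm \<alpha> ?f" using CT[OF f] by auto
    also have "\<dots> \<le> \<bar>CT\<bar> * fock_inf_norm \<alpha> ?f" using nf0 by (intro mult_right_mono) auto
    also have "\<dots> \<le> \<bar>CT\<bar> * exp (\<alpha> * (cmod z)\<^sup>2 / 2)" using nf by (intro mult_left_mono) auto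
    finally have "norm (toeplitz \<alpha> \<phi> ?f z) * exp (- \<alpha> * (cmod z)\<^sup>2 / 2) \<le> \<bar>CT\<bar> * exp (\<alpha> * (cmod z)\<^sup>2 / 2)" .
    moreover have "norm (toeplitz \<alpha> \<phi> ?f z) * exp (- \<alpha> * (cmod z)\<^sup>2 / 2)
        = cmod (heat_transform \<alpha> \<phi> 2 z) * exp (\<alpha> * (cmod z)\<^sup>2 / 2)"
    proof -
      have "exp (\<alpha> * (cmod z)\<^sup>2) * exp (- \<alpha> * (cmod z)\<^sup>2 / 2) = exp (\<alpha> * (cmod z)\<^sup>2 / 2)"
        by (simp flip: exp_add)
      then show ?thesis unfolding toeplitz_kernel by (simp add: norm_mult mult_ac)
    qed
    ultimately show ?thesis by simp
  qed
  define A where "A = (\<bar>CT\<bar> + \<alpha> / pi * KB (\<alpha> * 2 / 2)) / (\<alpha> / pi * G (\<alpha> * 2 / 2))"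
  have aA: "cmod (a z) \<le> A" for z
    unfolding A_def by (rule a_bound_from_heat[OF \<alpha> _ h2]) simp
  show ?thesis
  proof (intro allI impI)
    fix t :: real assume t: "t > 0"
    show "Linf (heat_transform \<alpha> \<phi> t)"
      unfolding Linf_def
    proof (intro conjI heat_meas exI AE_I2)
      fix z show "cmod (heat_transform \<alpha> \<phi> t z) \<le> \<alpha> / pi * A * G (\<alpha> * t / 2) + \<alpha> / pi * KB (\<alpha> * t / 2)"
        by (rule heat_bound_from_a[OF \<alpha> t aA])
    qed
  qed
qed

end

lemma partial_exp_le:
  fixes x :: real assumes x: "x \<ge> 0" and I: "finite I"
  shows "(\<Sum>k\<in>I. x^k / fact k) \<le> exp x"
proof -
  have "(\<Sum>k\<in>I. x^k /\<^sub>R fact k) \<le> (\<Sum>k. x^k /\<^sub>R fact k)"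
    by (rule sum_le_suminf[OF summable_exp_generic I]) (use x in simp)
  then show ?thesis by (simp add: exp_def divide_inverse mult.commute)
qed

lemma term_exp_le:
  fixes x :: real assumes x: "x \<ge> 0"
  shows "x^n / fact n \<le> exp x"
  using partial_exp_le[OF x, of "{n}"] by simp

lemma holo_integral:
  fixes h q :: "complex \<Rightarrow> complex"
  assumes hm[measurable]: "h \<in> borel_measurable borel" and qm[measurable]: "q \<in> borel_measurable borel"
  and int: "\<And>R. integrable lborel (\<lambda>w. norm (h w) * exp (R * norm (q w)))"
  shows "(\<lambda>z. \<integral>w. h w * exp (z * q w) \<partial>lborel) holomorphic_on UNIV"
proof -
  define c where "c n = (\<integral>w. h w * (q w ^ n /\<^sub>R fact n) \<partial>lborel)" for n
  have sums: "(\<lambda>n. c n * z^n) sums (\<integral>w. h w * exp (z * q w) \<partial>lborel)" for z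
  proof -
    define F where "F n w = h w * ((z * q w)^n /\<^sub>R fact n)" for n w
    have nF: "norm (F n w) = norm (h w) * ((norm z * norm (q w))^n / fact n)" for n w
      unfolding F_def by (simp add: norm_mult norm_power power_mult_distrib divide_inverse mult_ac)
    have Fm[measurable]: "F n \<in> borel_measurable lborel" for n
      unfolding F_def by measurable
    have dom: "integrable lborel (\<lambda>w. norm (h w) * exp (norm z * norm (q w)))" by (rule int)
    have Fint: "integrable lborel (F n)" for n
    proof (rule Bochner_Integration.integrable_bound[OF dom Fm])
      show "AE w in lborel. norm (F n w) \<le> norm (norm (h w) * exp (norm z * norm (q w)))"
      proof (intro AE_I2)
        fix w
        have "(norm z * norm (q w))^n / fact n \<le> exp (norm z * norm (q w))" by (rule term_exp_le) simp
        then have "norm (h w) * ((norm z * norm (q w))^n / fact n) \<le> norm (h w) * exp (norm z * norm (q w))"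
          by (rule mult_left_mono) simp
        then show "norm (F n w) \<le> norm (norm (h w) * exp (norm z * norm (q w)))" unfolding nF by simp
      qed
    qed
    have summ: "AE w in lborel. summable (\<lambda>n. norm (F n w))"
    proof (intro AE_I2)
      fix w
      have "summable (\<lambda>n. (norm z * norm (q w))^n /\<^sub>R fact n)" by (rule summable_exp_generic)
      then have "summable (\<lambda>n. norm (h w) * ((norm z * norm (q w))^n / fact n))"
        by (intro summable_mult) (simp add: divide_inverse mult.commute)
      then show "summable (\<lambda>n. norm (F n w))" unfolding nF .
    qed
    have summi: "summable (\<lambda>n. \<integral>w. norm (F n w) \<partial>lborel)"
    proof (rule bounded_imp_summable)
      show "0 \<le> (\<integral>w. norm (F n w) \<partial>lborel)" for n by simp
      show "(\<Sum>k\<le>n. \<integral>w. norm (F k w) \<partial>lborel) \<le> (\<integral>w. norm (h w) * exp (norm z * norm (q w)) \<partial>lborel)" for n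
      proof -
        have "(\<Sum>k\<le>n. \<integral>w. norm (F k w) \<partial>lborel) = (\<integral>w. (\<Sum>k\<le>n. norm (F k w)) \<partial>lborel)"
          by (rule Bochner_Integration.integral_sum[symmetric]) (use Fint in auto)
        also have "\<dots> \<le> (\<integral>w. norm (h w) * exp (norm z * norm (q w)) \<partial>lborel)"
        proof (rule integral_mono)
          show "integrable lborel (\<lambda>w. \<Sum>k\<le>n. norm (F k w))" using Fint by auto
          show "integrable lborel (\<lambda>w. norm (h w) * exp (norm z * norm (q w)))" by (rule dom)
          fix w
          have "(\<Sum>k\<le>n. norm (F k w)) = norm (h w) * (\<Sum>k\<le>n. (norm z * norm (q w))^k / fact k)"
            unfolding nF by (simp add: sum_distrib_left)
          also have "\<dots> \<le> norm (h w) * exp (norm z * norm (q w))"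
            by (intro mult_left_mono partial_exp_le) auto
          finally show "(\<Sum>k\<le>n. norm (F k w)) \<le> norm (h w) * exp (norm z * norm (q w))" .
        qed
        finally show ?thesis .
      qed
    qed
    have "(\<lambda>n. integral\<^sup>L lborel (F n)) sums (\<integral>w. (\<Sum>n. F n w) \<partial>lborel)"
      by (rule sums_integral[OF Fint summ summi])
    moreover have "integral\<^sup>L lborel (F n) = c n * z^n" for n
    proof -
      have "F n = (\<lambda>w. h w * (q w ^ n /\<^sub>R fact n) * z^n)"
        unfolding F_def by (rule ext) (simp add: power_mult_distrib scaleR_conv_of_real mult_ac)
      then show ?thesis unfolding c_def by simp
    qed
    moreover have "(\<Sum>n. F n w) = h w * exp (z * q w)" for w
      unfolding F_def exp_def by (rule suminf_mult[OF summable_exp_generic])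
    ultimately show ?thesis by simp
  qed
  have fun_eq: "(\<lambda>z. \<integral>w. h w * exp (z * q w) \<partial>lborel) = (\<lambda>z. \<Sum>n. c n * z^n)"
    using sums by (auto simp: sums_iff)
  have "\<And>y. summable (\<lambda>n. c n * y^n)" using sums by (auto simp: sums_iff)
  then have "((\<lambda>z. \<Sum>n. c n * z^n) has_field_derivative (\<Sum>n. diffs c n * x^n)) (at x)" for x
    by (rule termdiffs_strong_converges_everywhere)
  then show ?thesis unfolding fun_eq holomorphic_on_def field_differentiable_def
    by (auto intro: has_field_derivative_at_within)
qed

lemma borel_measurable_cnj' [measurable]: "cnj \<in> borel_measurable borel"
proof -
  have "continuous_on UNIV (\<lambda>x::complex. cnj x)" by (intro continuous_on_cnj continuous_on_id)
  then show ?thesis by (rule borel_measurable_continuous_onI)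
qed

lemma sq_bound: fixes \<alpha> r R :: real shows "\<alpha> > 0 \<Longrightarrow> - \<alpha> * r\<^sup>2 / 2 + R * (\<alpha> * r) \<le> \<alpha> * R\<^sup>2 + (- (\<alpha> / 4) * r\<^sup>2)"
proof -
  assume a: "\<alpha> > 0"
  have "0 \<le> \<alpha> * (r / 2 - R)\<^sup>2" using a by simp
  then show ?thesis by (simp add: power2_diff power_divide algebra_simps)
qed

lemma integrand_eq:
  "toeplitz_integrand \<alpha> \<phi> f z w
   = (\<phi> w * f w * complex_of_real (\<alpha> / pi * exp (- \<alpha> * (cmod w)\<^sup>2))) * exp (z * (complex_of_real \<alpha> * cnj w))"
  unfolding toeplitz_integrand_def fock_kernel_def by (simp add: exp_cnj mult_ac)

lemma integrand_norm:
  assumes \<alpha>: "\<alpha> > 0"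
  shows "norm (toeplitz_integrand \<alpha> \<phi> f z w)
    = cmod (\<phi> w) * cmod (f w) * exp (\<alpha> * (Re z * Re w + Im z * Im w)) * (\<alpha> / pi * exp (- \<alpha> * (cmod w)\<^sup>2))"
proof -
  have "norm (toeplitz_integrand \<alpha> \<phi> f z w)
      = cmod (\<phi> w) * cmod (f w) * norm (fock_kernel \<alpha> z w) * abs (\<alpha> / pi * exp (- \<alpha> * (cmod w)\<^sup>2))"
    unfolding toeplitz_integrand_def by (simp only: norm_mult complex_mod_cnj norm_of_real)
  then show ?thesis using \<alpha> by (simp add: norm_kernel)
qed

context bmo begin

lemma integrand_bound:
  assumes \<alpha>: "\<alpha> > 0" and fw: "cmod (f w) \<le> N * exp (\<alpha> * (cmod w)\<^sup>2 / 2)"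
  shows "norm (toeplitz_integrand \<alpha> \<phi> f z w)
    \<le> \<alpha> / pi * N * exp (\<alpha> * (cmod z)\<^sup>2 / 2) * (cmod (\<phi> w) * exp (- (\<alpha> / 2) * (cmod (z - w))\<^sup>2))"
proof -
  let ?A = "\<alpha> * (Re z * Re w + Im z * Im w)"
  have "norm (toeplitz_integrand \<alpha> \<phi> f z w) = cmod (\<phi> w) * cmod (f w) * exp ?A * (\<alpha> / pi * exp (- \<alpha> * (cmod w)\<^sup>2))"
    by (rule integrand_norm[OF \<alpha>])
  also have "\<dots> \<le> cmod (\<phi> w) * (N * exp (\<alpha> * (cmod w)\<^sup>2 / 2)) * exp ?A * (\<alpha> / pi * exp (- \<alpha> * (cmod w)\<^sup>2))"
    using \<alpha> fw by (intro mult_right_mono mult_left_mono) auto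
  also have "\<dots> = \<alpha> / pi * N * cmod (\<phi> w) * exp (\<alpha> * (cmod w)\<^sup>2 / 2 + ?A + (- \<alpha> * (cmod w)\<^sup>2))"
    by (simp only: exp_add) (simp add: mult_ac)
  also have "\<alpha> * (cmod w)\<^sup>2 / 2 + ?A + (- \<alpha> * (cmod w)\<^sup>2) = \<alpha> * (cmod z)\<^sup>2 / 2 + (- (\<alpha> / 2) * (cmod (z - w))\<^sup>2)"
    using quad_ident[of \<alpha> z w] by (simp add: algebra_simps)
  also have "\<alpha> / pi * N * cmod (\<phi> w) * exp (\<alpha> * (cmod z)\<^sup>2 / 2 + (- (\<alpha> / 2) * (cmod (z - w))\<^sup>2))
      = \<alpha> / pi * N * exp (\<alpha> * (cmod z)\<^sup>2 / 2) * (cmod (\<phi> w) * exp (- (\<alpha> / 2) * (cmod (z - w))\<^sup>2))"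
    by (simp only: exp_add) (simp add: mult_ac)
  finally show ?thesis .
qed

lemma a_bounded_from_Linf:
  assumes \<alpha>: "\<alpha> > 0" and L: "Linf (heat_transform \<alpha> \<phi> 1)"
  shows "\<exists>A. \<forall>z. cmod (a z) \<le> A"
proof -
  obtain M where M: "AE z in lborel. cmod (heat_transform \<alpha> \<phi> 1 z) \<le> M"
    using L unfolding Linf_def by blast
  define A0 where "A0 = (M + \<alpha> / pi * KB (\<alpha> * 1 / 2)) / (\<alpha> / pi * G (\<alpha> * 1 / 2))"
  have "cmod (a z) \<le> A0 + 8 * C" for z
  proof -
    have "\<exists>z'. cmod (z - z') \<le> 1/2 \<and> cmod (heat_transform \<alpha> \<phi> 1 z') \<le> M"
    proof (rule ccontr)
      assume "\<not> ?thesis"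
      then have "\<And>z'. z' \<in> ball z (1/2) \<Longrightarrow> \<not> cmod (heat_transform \<alpha> \<phi> 1 z') \<le> M"
        by (auto simp: dist_norm)
      then have "AE z' in lborel. z' \<notin> ball z (1/2)"
        using M by (auto elim!: eventually_mono)
      then have "ball z (1/2) \<in> null_sets lborel" by (subst AE_iff_null_sets) auto
      then have "emeasure lborel (ball z (1/2)) = 0" by auto
      moreover have "emeasure lborel (ball z (1/2)) > 0"
        using U_pos by (simp add: emeasure_ball_complex U_def[symmetric])
      ultimately show False by simp
    qed
    then obtain z' where z': "cmod (z - z') \<le> 1/2" "cmod (heat_transform \<alpha> \<phi> 1 z') \<le> M" by blast
    have "cmod (a z') \<le> A0" unfolding A0_def by (rule a_bound_from_heat[OF \<alpha> _ z'(2)]) simp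
    moreover have "cmod (a z - a z') \<le> 8 * C" by (rule a_close[OF z'(1)])
    ultimately show ?thesis using norm_triangle_sub[of "a z" "a z'"] by simp
  qed
  then show ?thesis by blast
qed

lemma toeplitz_f:
  assumes \<alpha>: "\<alpha> > 0" and A: "\<And>z. cmod (a z) \<le> A" and f: "f \<in> fock_inf \<alpha>"
  shows "(\<forall>z. integrable lborel (toeplitz_integrand \<alpha> \<phi> f z)) \<and> toeplitz \<alpha> \<phi> f \<in> fock_inf \<alpha> \<and>
    fock_inf_norm \<alpha> (toeplitz \<alpha> \<phi> f) \<le> (\<alpha> / pi * (KB (\<alpha> / 2) + A * G (\<alpha> / 2))) * fock_inf_norm \<alpha> f"
proof -
  define N where "N = fock_inf_norm \<alpha> f"
  have N0: "N \<ge> 0" unfolding N_def by (rule fock_norm_nonneg[OF f])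
  have c2: "\<alpha> / 2 > 0" using \<alpha> by simp
  have fw: "cmod (f w) \<le> N * exp (\<alpha> * (cmod w)\<^sup>2 / 2)" for w
  proof -
    have h1: "cmod (f w) * exp (- \<alpha> * (cmod w)\<^sup>2 / 2) \<le> N" unfolding N_def by (rule fock_pointwise[OF f])
    have e1: "exp (- \<alpha> * (cmod w)\<^sup>2 / 2) * exp (\<alpha> * (cmod w)\<^sup>2 / 2) = 1" by (simp flip: exp_add)
    have "cmod (f w) = cmod (f w) * exp (- \<alpha> * (cmod w)\<^sup>2 / 2) * exp (\<alpha> * (cmod w)\<^sup>2 / 2)"
      using e1 by (simp only: mult.assoc)
    also have "\<dots> \<le> N * exp (\<alpha> * (cmod w)\<^sup>2 / 2)" using h1 by (rule mult_right_mono) simp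
    finally show ?thesis .
  qed
  have fhol: "f holomorphic_on UNIV" using f unfolding fock_inf_def by blast
  have fm[measurable]: "f \<in> borel_measurable borel"
    by (rule borel_measurable_continuous_onI[OF holomorphic_on_imp_continuous_on[OF fhol]])
  have im[measurable]: "toeplitz_integrand \<alpha> \<phi> f z \<in> borel_measurable lborel" for z
    unfolding toeplitz_integrand_def[abs_def] fock_kernel_def by measurable
  let ?E = "\<lambda>z w. exp (- (\<alpha> / 2) * (cmod (z - w))\<^sup>2)"
  let ?B = "\<lambda>z w. \<alpha> / pi * N * exp (\<alpha> * (cmod z)\<^sup>2 / 2) * (cmod (\<phi> w) * ?E z w)"
  have Bint: "integrable lborel (?B z)" for z
    using phi_gauss_integrable(2)[OF c2, of z] by (rule integrable_mult_right)
  have pb: "norm (toeplitz_integrand \<alpha> \<phi> f z w) \<le> ?B z w" for z w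
    by (rule integrand_bound[OF \<alpha> fw])
  have iint: "integrable lborel (toeplitz_integrand \<alpha> \<phi> f z)" for z
  proof (rule Bochner_Integration.integrable_bound[OF Bint[of z] im], intro AE_I2)
    fix w
    show "norm (toeplitz_integrand \<alpha> \<phi> f z w) \<le> norm (?B z w)"
      by (rule order.trans[OF pb]) (simp only: real_norm_def abs_ge_self)
  qed
  define Kc where "Kc = \<alpha> / pi * (KB (\<alpha> / 2) + A * G (\<alpha> / 2))"
  have phiE: "(\<integral>w. cmod (\<phi> w) * ?E z w \<partial>lborel) \<le> KB (\<alpha> / 2) + A * G (\<alpha> / 2)" for z
  proof -
    have "(\<integral>w. cmod (\<phi> w) * ?E z w \<partial>lborel) \<le> (\<integral>w. cmod (\<phi> w - a z) * ?E z w + cmod (a z) * ?E z w \<partial>lborel)"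
    proof (rule integral_mono)
      show "integrable lborel (\<lambda>w. cmod (\<phi> w) * ?E z w)" by (rule phi_gauss_integrable(2)[OF c2])
      show "integrable lborel (\<lambda>w. cmod (\<phi> w - a z) * ?E z w + cmod (a z) * ?E z w)"
        using dev_integrable[OF c2, of z] gauss_integrable[OF c2, of z] by auto
      fix w
      have "cmod (\<phi> w) \<le> cmod (\<phi> w - a z) + cmod (a z)" using norm_triangle_sub[of "\<phi> w" "a z"] by simp
      then show "cmod (\<phi> w) * ?E z w \<le> cmod (\<phi> w - a z) * ?E z w + cmod (a z) * ?E z w"
        by (simp add: distrib_right[symmetric] mult_right_mono)
    qed
    also have "\<dots> = (\<integral>w. cmod (\<phi> w - a z) * ?E z w \<partial>lborel) + cmod (a z) * G (\<alpha> / 2)"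
      using dev_integrable[OF c2, of z] gauss_integrable[OF c2, of z] gauss_integral[of "\<alpha>/2" z]
      by (simp add: G_def)
    also have "\<dots> \<le> KB (\<alpha> / 2) + A * G (\<alpha> / 2)"
      using dev_integral[OF c2, of z] A[of z] G_pos[OF c2] by (intro add_mono mult_right_mono) auto
    finally show ?thesis .
  qed
  have Tb: "cmod (toeplitz \<alpha> \<phi> f z) * exp (- \<alpha> * (cmod z)\<^sup>2 / 2) \<le> Kc * N" for z
  proof -
    have "cmod (toeplitz \<alpha> \<phi> f z) \<le> (\<integral>w. norm (toeplitz_integrand \<alpha> \<phi> f z w) \<partial>lborel)"
      unfolding toeplitz_def by (rule integral_norm_bound)
    also have "\<dots> \<le> (\<integral>w. ?B z w \<partial>lborel)"
      using iint[of z] Bint[of z] pb by (intro integral_mono) auto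
    also have "\<dots> = \<alpha> / pi * N * exp (\<alpha> * (cmod z)\<^sup>2 / 2) * (\<integral>w. cmod (\<phi> w) * ?E z w \<partial>lborel)"
      by simp
    also have "\<dots> \<le> \<alpha> / pi * N * exp (\<alpha> * (cmod z)\<^sup>2 / 2) * (KB (\<alpha> / 2) + A * G (\<alpha> / 2))"
      using \<alpha> N0 phiE[of z] by (intro mult_left_mono) auto
    finally have "cmod (toeplitz \<alpha> \<phi> f z) * exp (- \<alpha> * (cmod z)\<^sup>2 / 2)
       \<le> \<alpha> / pi * N * exp (\<alpha> * (cmod z)\<^sup>2 / 2) * (KB (\<alpha> / 2) + A * G (\<alpha> / 2)) * exp (- \<alpha> * (cmod z)\<^sup>2 / 2)"
      by (rule mult_right_mono) simp
    also have "\<dots> = Kc * N * (exp (\<alpha> * (cmod z)\<^sup>2 / 2) * exp (- \<alpha> * (cmod z)\<^sup>2 / 2))"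
      unfolding Kc_def by (simp add: mult_ac)
    also have "exp (\<alpha> * (cmod z)\<^sup>2 / 2) * exp (- \<alpha> * (cmod z)\<^sup>2 / 2) = 1" by (simp flip: exp_add)
    finally show ?thesis by simp
  qed
  have hol: "toeplitz \<alpha> \<phi> f holomorphic_on UNIV"
  proof -
    let ?h = "\<lambda>w. \<phi> w * f w * complex_of_real (\<alpha> / pi * exp (- \<alpha> * (cmod w)\<^sup>2))"
    let ?q = "\<lambda>w. complex_of_real \<alpha> * cnj w"
    have eq: "toeplitz \<alpha> \<phi> f = (\<lambda>z. \<integral>w. ?h w * exp (z * ?q w) \<partial>lborel)"
      unfolding toeplitz_def integrand_eq ..
    have "(\<lambda>z. \<integral>w. ?h w * exp (z * ?q w) \<partial>lborel) holomorphic_on UNIV"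
    proof (rule holo_integral)
      show "?h \<in> borel_measurable borel" by measurable
      show "?q \<in> borel_measurable borel" by measurable
      fix R :: real
      let ?D = "\<lambda>w. \<alpha> / pi * N * exp (\<alpha> * R\<^sup>2) * (cmod (\<phi> w) * exp (- (\<alpha> / 4) * (cmod (0 - w))\<^sup>2))"
      have c4: "\<alpha> / 4 > 0" using \<alpha> by simp
      show "integrable lborel (\<lambda>w. norm (?h w) * exp (R * norm (?q w)))"
      proof (rule Bochner_Integration.integrable_bound)
        show "integrable lborel ?D"
          using phi_gauss_integrable(2)[OF c4, of 0] by (rule integrable_mult_right)
        show "(\<lambda>w. norm (?h w) * exp (R * norm (?q w))) \<in> borel_measurable lborel" by measurable
        show "AE w in lborel. norm (norm (?h w) * exp (R * norm (?q w))) \<le> norm (?D w)"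
        proof (intro AE_I2)
          fix w
          have nh: "norm (?h w) = cmod (\<phi> w) * cmod (f w) * (\<alpha> / pi * exp (- \<alpha> * (cmod w)\<^sup>2))"
            using \<alpha> by (simp only: norm_mult norm_of_real) simp
          have nq: "norm (?q w) = \<alpha> * cmod w" using \<alpha> by (simp add: norm_mult)
          have "norm (?h w) * exp (R * norm (?q w))
              \<le> cmod (\<phi> w) * (N * exp (\<alpha> * (cmod w)\<^sup>2 / 2)) * (\<alpha> / pi * exp (- \<alpha> * (cmod w)\<^sup>2)) * exp (R * (\<alpha> * cmod w))"
            unfolding nh nq using \<alpha> fw[of w] by (intro mult_right_mono mult_left_mono) auto
          also have "\<dots> = \<alpha> / pi * N * cmod (\<phi> w) * exp (\<alpha> * (cmod w)\<^sup>2 / 2 + (- \<alpha> * (cmod w)\<^sup>2) + R * (\<alpha> * cmod w))"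
            by (simp only: exp_add) (simp add: mult_ac)
          also have "\<dots> \<le> \<alpha> / pi * N * cmod (\<phi> w) * exp (\<alpha> * R\<^sup>2 + (- (\<alpha> / 4) * (cmod w)\<^sup>2))"
          proof -
            have "\<alpha> * (cmod w)\<^sup>2 / 2 + (- \<alpha> * (cmod w)\<^sup>2) + R * (\<alpha> * cmod w) = - \<alpha> * (cmod w)\<^sup>2 / 2 + R * (\<alpha> * cmod w)"
              by simp
            also have "\<dots> \<le> \<alpha> * R\<^sup>2 + (- (\<alpha> / 4) * (cmod w)\<^sup>2)" by (rule sq_bound[OF \<alpha>])
            finally show ?thesis using \<alpha> N0 by (intro mult_left_mono) auto
          qed
          also have "\<dots> = ?D w" by (simp only: exp_add) (simp add: mult_ac)
          finally show "norm (norm (?h w) * exp (R * norm (?q w))) \<le> norm (?D w)" using \<alpha> N0 by simp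
        qed
      qed
    qed
    then show ?thesis unfolding eq .
  qed
  have Tf: "toeplitz \<alpha> \<phi> f \<in> fock_inf \<alpha>"
    unfolding fock_inf_def using hol Tb by blast
  have "fock_inf_norm \<alpha> (toeplitz \<alpha> \<phi> f) \<le> Kc * N" by (rule fock_norm_le[OF Tb])
  then show ?thesis using iint Tf unfolding Kc_def N_def by blast
qed

end

theorem theorem4p5:
  fixes \<alpha> :: real and \<phi> :: "complex \<Rightarrow> complex"
  assumes "\<alpha> > 0" and "\<phi> \<in> BMO"
  shows "toeplitz_bounded_fock_inf \<alpha> \<phi> \<longleftrightarrow> (\<forall>t>0. Linf (heat_transform \<alpha> \<phi> t))"
proof -
  interpret bmo \<phi> by unfold_locales (rule assms(2))
  show ?thesis
  proof
    assume tb: "toeplitz_bounded_fock_inf \<alpha> \<phi>"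
    show "\<forall>t>0. Linf (heat_transform \<alpha> \<phi> t)" by (rule forward[OF assms(1) tb])
  next
    assume L: "\<forall>t>0. Linf (heat_transform \<alpha> \<phi> t)"
    then have L1: "Linf (heat_transform \<alpha> \<phi> 1)" by simp
    obtain A where A: "\<And>z. cmod (a z) \<le> A" using a_bounded_from_Linf[OF assms(1) L1] by blast
    show "toeplitz_bounded_fock_inf \<alpha> \<phi>" unfolding toeplitz_bounded_fock_inf_def
      using toeplitz_f[OF assms(1) A] by blast
  qed
qed

end
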